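(* $\mathbb F_0=\mathbb F_{\sqrt{1+x^2}}$.
   Context: An origami pair is a pair $(\mathcal P,\mathcal L)$ where $\mathcal P\subset\mathbb R^2$ is a set of points and $\mathcal L$ is a collection of lines in $\mathbb R^2$ such that: (i) the intersection point of any two non-parallel lines of $\mathcal L$ lies in $\mathcal P$; (ii) for any two distinct points of $\mathcal P$, the line through them is in $\mathcal L$; (iii) for any two distinct points of $\mathcal P$, the perpendicular bisector of the segment joining them is in $\mathcal L$; (iv) if $L_1,L_2\in\mathcal L$, then every line equidistant from $L_1$ and $L_2$ is in $\mathcal L$ (the midline if they are parallel, the angle bisectors if they intersect); (v) if $L_1,L_2\in\mathcal L$, then the mirror reflection of $L_2$ across $L_1$ is in $\mathcal L$. A set $\mathcal P\subset\mathbb R^2$ is closed under origami constructions if there is a collection of lines $\mathcal L$ with $(\mathcal P,\mathcal L)$ an origami pair. The set of origami constructible points is $\mathcal P_0=\bigcap\{\mathcal P : (0,0),(0,1)\in\mathcal P \text{ and } \mathcal P \text{ is closed under origami constructions}\}$. The set of origami numbers is $\mathbb F_0=\{\alpha\in\mathbb R : \exists v_1,v_2\in\mathcal P_0,\ |\alpha|=\operatorname{dist}(v_1,v_2)\}$. $\mathbb F_{\sqrt{1+x^2}}$ denotes the smallest subfield of $\mathbb C$ that, together with any element $x$, contains a square root of $1+x^2$ (equivalently both square roots, since fields are closed under negation). *)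

theory Defs
  imports "HOL-Analysis.Analysis"
begin

text \<open>Points of the plane are pairs of reals; dist on real \<times> real is Euclidean.
  A line is a set of the form {(x,y). a x + b y = c} with (a,b) \<noteq> (0,0).\<close>

type_synonym point = "real \<times> real"

definition is_line :: "point set \<Rightarrow> bool" where
  "is_line L \<longleftrightarrow> (\<exists>a b c. (a, b) \<noteq> (0, 0) \<and> L = {(x, y). a * x + b * y = c})"

definition line_through :: "point \<Rightarrow> point \<Rightarrow> point set" where
  "line_through p q = {(x, y). (fst q - fst p) * (y - snd p) = (snd q - snd p) * (x - fst p)}"

definition perp_bisector :: "point \<Rightarrow> point \<Rightarrow> point set" where
  "perp_bisector p q = {z. dist z p = dist z q}"

definition mirror_point :: "point set \<Rightarrow> point \<Rightarrow> point \<Rightarrow> bool" where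
  "mirror_point L z w \<longleftrightarrow> (z \<in> L \<and> w = z) \<or> (z \<noteq> w \<and> L = perp_bisector z w)"

definition reflect_line :: "point set \<Rightarrow> point set \<Rightarrow> point set" where
  "reflect_line L1 L2 = {w. \<exists>z\<in>L2. mirror_point L1 z w}"

text \<open>A line equidistant from two distinct lines L1, L2: all of its points are at equal
  distance from L1 and L2 (the midline if parallel, the angle bisectors if they meet).\<close>
definition equidistant_line :: "point set \<Rightarrow> point set \<Rightarrow> point set \<Rightarrow> bool" where
  "equidistant_line L1 L2 L \<longleftrightarrow> is_line L \<and> (\<forall>z\<in>L. infdist z L1 = infdist z L2)"

definition origami_pair :: "point set \<Rightarrow> point set set \<Rightarrow> bool" where
  "origami_pair P \<L> \<longleftrightarrow>
     (\<forall>L\<in>\<L>. is_line L) \<and>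
     (\<forall>L1\<in>\<L>. \<forall>L2\<in>\<L>. \<forall>p. L1 \<inter> L2 = {p} \<longrightarrow> p \<in> P) \<and>
     (\<forall>p\<in>P. \<forall>q\<in>P. p \<noteq> q \<longrightarrow> line_through p q \<in> \<L>) \<and>
     (\<forall>p\<in>P. \<forall>q\<in>P. p \<noteq> q \<longrightarrow> perp_bisector p q \<in> \<L>) \<and>
     (\<forall>L1\<in>\<L>. \<forall>L2\<in>\<L>. \<forall>L. L1 \<noteq> L2 \<and> equidistant_line L1 L2 L \<longrightarrow> L \<in> \<L>) \<and>
     (\<forall>L1\<in>\<L>. \<forall>L2\<in>\<L>. reflect_line L1 L2 \<in> \<L>)"

definition origami_closed :: "point set \<Rightarrow> bool" where
  "origami_closed P \<longleftrightarrow> (\<exists>\<L>. origami_pair P \<L>)"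

definition origami_points :: "point set" where
  "origami_points = \<Inter>{P. (0, 0) \<in> P \<and> (0, 1) \<in> P \<and> origami_closed P}"

definition origami_numbers :: "real set" where
  "origami_numbers = {\<alpha>. \<exists>v1\<in>origami_points. \<exists>v2\<in>origami_points. \<bar>\<alpha>\<bar> = dist v1 v2}"

definition is_subfield :: "complex set \<Rightarrow> bool" where
  "is_subfield F \<longleftrightarrow> 0 \<in> F \<and> 1 \<in> F \<and>
     (\<forall>x\<in>F. \<forall>y\<in>F. x + y \<in> F \<and> x - y \<in> F \<and> x * y \<in> F) \<and>
     (\<forall>x\<in>F. x \<noteq> 0 \<longrightarrow> inverse x \<in> F)"

definition F_sqrt_1_plus_sq :: "complex set" where
  "F_sqrt_1_plus_sq = \<Inter>{F. is_subfield F \<and> (\<forall>x\<in>F. \<exists>y\<in>F. y\<^sup>2 = 1 + x\<^sup>2)}"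

end

theory Submission
  imports Defs
begin



definition lin :: "real \<Rightarrow> real \<Rightarrow> real \<Rightarrow> point set" where
  "lin a b c = {(x, y). a * x + b * y = c}"

lemma mem_lin[simp]: "p \<in> lin a b c \<longleftrightarrow> a * fst p + b * snd p = c"
  by (cases p) (simp add: lin_def)

lemma is_line_lin: "(a, b) \<noteq> (0, 0) \<Longrightarrow> is_line (lin a b c)"
  unfolding is_line_def lin_def by blast

lemma is_lineE: assumes "is_line L" obtains a b c where "(a, b) \<noteq> (0, 0)" "L = lin a b c"
  using assms unfolding is_line_def lin_def by blast

lemma line_through_eq: "line_through p q = lin (snd q - snd p) (fst p - fst q)
   ((snd q - snd p) * fst p - (fst q - fst p) * snd p)"
  unfolding line_through_def lin_def by (auto simp: algebra_simps)

lemma dist_pt: "dist (z::point) p = sqrt ((fst z - fst p)\<^sup>2 + (snd z - snd p)\<^sup>2)"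
  by (cases z; cases p) (simp add: dist_Pair_Pair dist_real_def)

lemma perp_bisector_eq: "perp_bisector p q = lin (2 * (fst q - fst p)) (2 * (snd q - snd p))
   ((fst q)\<^sup>2 + (snd q)\<^sup>2 - (fst p)\<^sup>2 - (snd p)\<^sup>2)"
proof -
  have "dist z p = dist z q \<longleftrightarrow> (fst z - fst p)\<^sup>2 + (snd z - snd p)\<^sup>2 = (fst z - fst q)\<^sup>2 + (snd z - snd q)\<^sup>2" for z
    unfolding dist_pt by (simp add: add_nonneg_nonneg)
  also have "\<dots> z \<longleftrightarrow> z \<in> lin (2 * (fst q - fst p)) (2 * (snd q - snd p))
   ((fst q)\<^sup>2 + (snd q)\<^sup>2 - (fst p)\<^sup>2 - (snd p)\<^sup>2)" for z
    by (simp add: power2_eq_square algebra_simps)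
  finally show ?thesis unfolding perp_bisector_def by auto
qed

lemma lin_scale: "k \<noteq> 0 \<Longrightarrow> lin (k * a) (k * b) (k * c) = lin a b c"
proof -
  assume k: "k \<noteq> 0"
  have "k * a * x + k * b * y = k * c \<longleftrightarrow> a * x + b * y = c" for x y
  proof -
    have "k * a * x + k * b * y = k * (a * x + b * y)" by (simp add: algebra_simps)
    thus ?thesis using k by simp
  qed
  thus ?thesis unfolding lin_def by auto
qed

definition rpt :: "real \<Rightarrow> real \<Rightarrow> real \<Rightarrow> point \<Rightarrow> point" where
  "rpt a b c p = (fst p - 2 * a * ((a * fst p + b * snd p - c) / (a\<^sup>2 + b\<^sup>2)),
                  snd p - 2 * b * ((a * fst p + b * snd p - c) / (a\<^sup>2 + b\<^sup>2)))"

lemma nz: "(a, b) \<noteq> (0::real, 0::real) \<Longrightarrow> a\<^sup>2 + b\<^sup>2 \<noteq> 0"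
  by (simp add: sum_power2_eq_zero_iff)

lemma rpt_invol: assumes "(a, b) \<noteq> (0, 0)" shows "rpt a b c (rpt a b c p) = p"
proof -
  have N: "a\<^sup>2 + b\<^sup>2 \<noteq> 0" using nz[OF assms] .
  have f: "a * fst (rpt a b c q) + b * snd (rpt a b c q) - c = - (a * fst q + b * snd q - c)" for q
  proof -
    define t where "t = (a * fst q + b * snd q - c) / (a\<^sup>2 + b\<^sup>2)"
    have r: "rpt a b c q = (fst q - 2 * a * t, snd q - 2 * b * t)" by (simp add: rpt_def t_def)
    have tt: "(a\<^sup>2 + b\<^sup>2) * t = a * fst q + b * snd q - c" using N by (simp add: t_def)
    have "a * fst (rpt a b c q) + b * snd (rpt a b c q) - c =
      (a * fst q + b * snd q - c) - 2 * ((a\<^sup>2 + b\<^sup>2) * t)"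
      unfolding r by (simp add: algebra_simps power2_eq_square)
    also have "\<dots> = - (a * fst q + b * snd q - c)" using tt by simp
    finally show ?thesis .
  qed
  have e: "rpt a b c (rpt a b c p) = (fst (rpt a b c p) - 2 * a * ((- (a * fst p + b * snd p - c)) / (a\<^sup>2 + b\<^sup>2)),
     snd (rpt a b c p) - 2 * b * ((- (a * fst p + b * snd p - c)) / (a\<^sup>2 + b\<^sup>2)))"
    unfolding rpt_def[of a b c "rpt a b c p"] f[of p] by simp
  show ?thesis unfolding e using N by (cases p) (simp add: rpt_def divide_simps; simp add: algebra_simps)
qed

lemma lin_sub_prop:
  assumes ab: "(a, b) \<noteq> (0, 0)" and sub: "lin a b c \<subseteq> lin A B C"
  shows "\<exists>s. A = s * a \<and> B = s * b \<and> C = s * c"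
proof -
  have N: "a\<^sup>2 + b\<^sup>2 \<noteq> 0" using nz[OF ab] .
  define z0 where "z0 = (c * a / (a\<^sup>2 + b\<^sup>2), c * b / (a\<^sup>2 + b\<^sup>2))"
  have "a * (c * a / (a\<^sup>2 + b\<^sup>2)) + b * (c * b / (a\<^sup>2 + b\<^sup>2)) = c * (a\<^sup>2 + b\<^sup>2) / (a\<^sup>2 + b\<^sup>2)"
    by (simp add: algebra_simps power2_eq_square add_divide_distrib)
  hence z0: "z0 \<in> lin a b c" using N ab by (auto simp: z0_def)
  have z1: "(fst z0 - b, snd z0 + a) \<in> lin a b c" using z0 by (simp add: algebra_simps)
  have e1: "A * fst z0 + B * snd z0 = C" using sub z0 by auto
  have "(fst z0 - b, snd z0 + a) \<in> lin A B C" using sub z1 by blast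
  hence e2: "A * (fst z0 - b) + B * (snd z0 + a) = C" by simp
  have ba: "B * a = A * b" using e1 e2 by (simp add: algebra_simps)
  define s where "s = (A * a + B * b) / (a\<^sup>2 + b\<^sup>2)"
  have sA: "A = s * a"
  proof -
    have "s * a = (A * a * a + (B * a) * b) / (a\<^sup>2 + b\<^sup>2)" by (simp add: s_def algebra_simps)
    also have "\<dots> = A * (a\<^sup>2 + b\<^sup>2) / (a\<^sup>2 + b\<^sup>2)" unfolding ba by (simp add: algebra_simps power2_eq_square)
    finally show ?thesis using N ab by auto
  qed
  have sB: "B = s * b"
  proof -
    have "s * b = ((A * b) * a + B * b * b) / (a\<^sup>2 + b\<^sup>2)" by (simp add: s_def algebra_simps)
    also have "\<dots> = B * (a\<^sup>2 + b\<^sup>2) / (a\<^sup>2 + b\<^sup>2)" unfolding ba[symmetric] by (simp add: algebra_simps power2_eq_square)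
    finally show ?thesis using N ab by auto
  qed
  have "C = s * (a * fst z0 + b * snd z0)" using e1 sA sB by (simp add: algebra_simps)
  hence "C = s * c" using z0 by simp
  thus ?thesis using sA sB by blast
qed

lemma lin_sub_eq:
  assumes ab: "(a, b) \<noteq> (0, 0)" and AB: "(A, B) \<noteq> (0, 0)" and sub: "lin a b c \<subseteq> lin A B C"
  shows "lin A B C = lin a b c"
proof -
  obtain s where s: "A = s * a" "B = s * b" "C = s * c" using lin_sub_prop[OF ab sub] by blast
  have "s \<noteq> 0" using AB s by auto
  thus ?thesis using s lin_scale by simp
qed

lemma rpt_fix: "a * fst z + b * snd z = c \<Longrightarrow> rpt a b c z = z"
  by (simp add: rpt_def)

lemma mirror_point_iff:
  assumes ab: "(a, b) \<noteq> (0, 0)"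
  shows "mirror_point (lin a b c) z w \<longleftrightarrow> w = rpt a b c z"
proof -
  have N: "a\<^sup>2 + b\<^sup>2 \<noteq> 0" using nz[OF ab] .
  define f where "f = a * fst z + b * snd z - c"
  define t where "t = f / (a\<^sup>2 + b\<^sup>2)"
  have r: "rpt a b c z = (fst z - 2 * a * t, snd z - 2 * b * t)" by (simp add: rpt_def t_def f_def)
  have tt: "(a\<^sup>2 + b\<^sup>2) * t = f" using N by (simp add: t_def)
  show ?thesis
  proof
    assume "mirror_point (lin a b c) z w"
    then consider "z \<in> lin a b c" "w = z" | "z \<noteq> w" "lin a b c = perp_bisector z w"
      unfolding mirror_point_def by blast
    thus "w = rpt a b c z"
    proof cases
      case 1 thus ?thesis using rpt_fix[of a z b c] by simp
    next
      case 2
      then obtain s where s: "2 * (fst w - fst z) = s * a" "2 * (snd w - snd z) = s * b"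
        "(fst w)\<^sup>2 + (snd w)\<^sup>2 - (fst z)\<^sup>2 - (snd z)\<^sup>2 = s * c"
        using lin_sub_prop[OF ab, of c] unfolding perp_bisector_eq by (metis order_refl)
      have w: "w = (fst z + s * a / 2, snd z + s * b / 2)" using s(1,2)
        by (cases w) (auto simp: field_simps)
      have "s \<noteq> 0" using 2(1) w by (cases z) auto
      have "s * c = s * (a * fst z + b * snd z + s * (a\<^sup>2 + b\<^sup>2) / 4)"
        using s(3) unfolding w by (simp add: power2_eq_square field_simps)
      hence "c = a * fst z + b * snd z + s * (a\<^sup>2 + b\<^sup>2) / 4" using \<open>s \<noteq> 0\<close> by simp
      hence "f = - (s * (a\<^sup>2 + b\<^sup>2) / 4)" unfolding f_def by simp
      hence "s * (a\<^sup>2 + b\<^sup>2) = - 4 * f" by simp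
      hence "s * (a\<^sup>2 + b\<^sup>2) = (a\<^sup>2 + b\<^sup>2) * (- 4 * t)" using tt by simp
      hence "s = - 4 * t" using N by (metis mult.commute mult_right_cancel)
      thus ?thesis unfolding w r by simp
    qed
  next
    assume wr: "w = rpt a b c z"
    show "mirror_point (lin a b c) z w"
    proof (cases "f = 0")
      case True
      hence "z \<in> lin a b c" by (simp add: f_def)
      thus ?thesis using wr rpt_fix[of a z b c] unfolding mirror_point_def by simp
    next
      case False
      hence t0: "t \<noteq> 0" using N by (simp add: t_def)
      have ne: "z \<noteq> w" using wr r t0 ab by (cases z) auto
      have e: "(fst w)\<^sup>2 + (snd w)\<^sup>2 - (fst z)\<^sup>2 - (snd z)\<^sup>2 = (- 4 * t) * c"
      proof -
        have "(fst w)\<^sup>2 + (snd w)\<^sup>2 - (fst z)\<^sup>2 - (snd z)\<^sup>2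
           = - 4 * t * (a * fst z + b * snd z) + 4 * t * ((a\<^sup>2 + b\<^sup>2) * t)"
          unfolding wr r by (simp add: power2_eq_square algebra_simps)
        also have "\<dots> = (- 4 * t) * c" unfolding tt f_def by (simp add: algebra_simps)
        finally show ?thesis .
      qed
      have "perp_bisector z w = lin ((- 4 * t) * a) ((- 4 * t) * b) ((- 4 * t) * c)"
        unfolding perp_bisector_eq e unfolding wr r by (simp add: algebra_simps)
      also have "\<dots> = lin a b c" using lin_scale[of "- 4 * t" a b c] t0 by simp
      finally show ?thesis using ne unfolding mirror_point_def by simp
    qed
  qed
qed

lemma reflect_line_eq:
  assumes ab: "(a, b) \<noteq> (0, 0)"
  shows "reflect_line (lin a b c) L = rpt a b c ` L"
  unfolding reflect_line_def mirror_point_iff[OF ab] by auto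

lemma reflect_line_eq2:
  assumes ab: "(a, b) \<noteq> (0, 0)"
  shows "reflect_line (lin a b c) L = {w. rpt a b c w \<in> L}"
  unfolding reflect_line_eq[OF ab] using rpt_invol[OF ab] by (auto, metis image_eqI)

lemma reflect_lin:
  assumes ab: "(a, b) \<noteq> (0, 0)"
  shows "reflect_line (lin a b c) (lin a' b' c') =
    lin (a' - 2 * ((a * a' + b * b') / (a\<^sup>2 + b\<^sup>2)) * a) (b' - 2 * ((a * a' + b * b') / (a\<^sup>2 + b\<^sup>2)) * b)
        (c' - 2 * ((a * a' + b * b') / (a\<^sup>2 + b\<^sup>2)) * c)"
proof -
  have N: "a\<^sup>2 + b\<^sup>2 \<noteq> 0" using nz[OF ab] .
  define k where "k = (a * a' + b * b') / (a\<^sup>2 + b\<^sup>2)"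
  have "rpt a b c w \<in> lin a' b' c' \<longleftrightarrow>
      w \<in> lin (a' - 2 * k * a) (b' - 2 * k * b) (c' - 2 * k * c)" for w
  proof -
    define t where "t = (a * fst w + b * snd w - c) / (a\<^sup>2 + b\<^sup>2)"
    have r: "rpt a b c w = (fst w - 2 * a * t, snd w - 2 * b * t)" by (simp add: rpt_def t_def)
    have kt: "(a * a' + b * b') * t = k * (a * fst w + b * snd w - c)"
      by (simp add: k_def t_def)
    have "rpt a b c w \<in> lin a' b' c' \<longleftrightarrow> a' * fst w + b' * snd w - 2 * ((a * a' + b * b') * t) = c'"
      unfolding r by (simp add: algebra_simps)
    also have "\<dots> \<longleftrightarrow> w \<in> lin (a' - 2 * k * a) (b' - 2 * k * b) (c' - 2 * k * c)"
      unfolding kt by (simp add: algebra_simps)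
    finally show ?thesis .
  qed
  thus ?thesis unfolding reflect_line_eq2[OF ab] k_def by auto
qed

lemma reflect_lin_nd:
  fixes a b a' b' :: real
  assumes ab: "(a, b) \<noteq> (0, 0)" and ab': "(a', b') \<noteq> (0, 0)"
  shows "(a' - 2 * ((a * a' + b * b') / (a\<^sup>2 + b\<^sup>2)) * a, b' - 2 * ((a * a' + b * b') / (a\<^sup>2 + b\<^sup>2)) * b) \<noteq> (0, 0)"
proof
  have N: "a\<^sup>2 + b\<^sup>2 \<noteq> 0" using nz[OF ab] .
  define k where "k = (a * a' + b * b') / (a\<^sup>2 + b\<^sup>2)"
  assume "(a' - 2 * ((a * a' + b * b') / (a\<^sup>2 + b\<^sup>2)) * a, b' - 2 * ((a * a' + b * b') / (a\<^sup>2 + b\<^sup>2)) * b) = (0, 0)"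
  hence e: "a' = 2 * k * a" "b' = 2 * k * b" unfolding k_def by auto
  have "k * (a\<^sup>2 + b\<^sup>2) = a * a' + b * b'" using N by (simp add: k_def)
  also have "\<dots> = 2 * k * (a\<^sup>2 + b\<^sup>2)" unfolding e by (simp add: power2_eq_square algebra_simps)
  finally have "k = 0" using ab by auto
  thus False using e ab' by simp
qed

lemma cs_ineq: "\<bar>a * u + b * v\<bar> \<le> sqrt (a\<^sup>2 + b\<^sup>2) * sqrt (u\<^sup>2 + v\<^sup>2)"
proof -
  have "(a * u + b * v)\<^sup>2 \<le> (a\<^sup>2 + b\<^sup>2) * (u\<^sup>2 + v\<^sup>2)"
  proof -
    have "(a\<^sup>2 + b\<^sup>2) * (u\<^sup>2 + v\<^sup>2) - (a * u + b * v)\<^sup>2 = (a * v - b * u)\<^sup>2"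
      by (simp add: power2_eq_square algebra_simps)
    thus ?thesis by (metis diff_ge_0_iff_ge zero_le_power2)
  qed
  hence "sqrt ((a * u + b * v)\<^sup>2) \<le> sqrt ((a\<^sup>2 + b\<^sup>2) * (u\<^sup>2 + v\<^sup>2))"
    using real_sqrt_le_mono by blast
  thus ?thesis by (simp add: real_sqrt_mult)
qed

lemma infdist_lin:
  assumes ab: "(a, b) \<noteq> (0, 0)"
  shows "infdist z (lin a b c) = \<bar>a * fst z + b * snd z - c\<bar> / sqrt (a\<^sup>2 + b\<^sup>2)"
proof -
  have N: "a\<^sup>2 + b\<^sup>2 \<noteq> 0" using nz[OF ab] .
  have Np: "sqrt (a\<^sup>2 + b\<^sup>2) > 0" using N by (simp add: add_nonneg_nonneg order_le_neq_trans)
  define f where "f = a * fst z + b * snd z - c"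
  define t where "t = f / (a\<^sup>2 + b\<^sup>2)"
  have tt: "(a\<^sup>2 + b\<^sup>2) * t = f" using N by (simp add: t_def)
  define p where "p = (fst z - a * t, snd z - b * t)"
  have pin: "p \<in> lin a b c"
  proof -
    have "a * fst p + b * snd p = f + c - (a\<^sup>2 + b\<^sup>2) * t"
      by (simp add: p_def f_def power2_eq_square algebra_simps)
    thus ?thesis using tt by simp
  qed
  have dp: "dist z p = \<bar>f\<bar> / sqrt (a\<^sup>2 + b\<^sup>2)"
  proof -
    have "dist z p = sqrt (t\<^sup>2 * (a\<^sup>2 + b\<^sup>2))" unfolding dist_pt p_def
      by (simp add: power2_eq_square algebra_simps)
    also have "\<dots> = \<bar>t\<bar> * sqrt (a\<^sup>2 + b\<^sup>2)" by (simp add: real_sqrt_mult)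
    also have "\<dots> = \<bar>f\<bar> / sqrt (a\<^sup>2 + b\<^sup>2)"
    proof -
      have "\<bar>f\<bar> = \<bar>a\<^sup>2 + b\<^sup>2\<bar> * \<bar>t\<bar>" using tt abs_mult by metis
      hence "\<bar>f\<bar> = \<bar>t\<bar> * (a\<^sup>2 + b\<^sup>2)" by simp
      have s2: "sqrt (a\<^sup>2 + b\<^sup>2) * sqrt (a\<^sup>2 + b\<^sup>2) = a\<^sup>2 + b\<^sup>2" by (simp add: add_nonneg_nonneg)
      have "\<bar>f\<bar> / sqrt (a\<^sup>2 + b\<^sup>2) = \<bar>t\<bar> * sqrt (a\<^sup>2 + b\<^sup>2) * sqrt (a\<^sup>2 + b\<^sup>2) / sqrt (a\<^sup>2 + b\<^sup>2)"
        unfolding mult.assoc s2 \<open>\<bar>f\<bar> = \<bar>t\<bar> * (a\<^sup>2 + b\<^sup>2)\<close> ..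
      thus ?thesis using Np by simp
    qed
    finally show ?thesis .
  qed
  have lb: "\<bar>f\<bar> / sqrt (a\<^sup>2 + b\<^sup>2) \<le> dist z q" if q: "q \<in> lin a b c" for q
  proof -
    have "f = a * (fst z - fst q) + b * (snd z - snd q)" using q by (simp add: f_def algebra_simps)
    hence "\<bar>f\<bar> \<le> sqrt (a\<^sup>2 + b\<^sup>2) * dist z q" unfolding dist_pt using cs_ineq by simp
    thus ?thesis using Np by (simp add: field_simps)
  qed
  have "infdist z (lin a b c) = (INF q\<in>lin a b c. dist z q)"
    using pin by (intro infdist_notempty) auto
  also have "\<dots> = \<bar>f\<bar> / sqrt (a\<^sup>2 + b\<^sup>2)"
    by (rule cInf_eq_minimum; use pin dp lb in force)
  finally show ?thesis unfolding f_def .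
qed




lemma rpt_inj: "(a, b) \<noteq> (0, 0) \<Longrightarrow> inj (rpt a b c)"
  by (metis injI rpt_invol)

lemma lt_isect:
  assumes "p \<noteq> q" "p \<noteq> r"
    and det: "(fst q - fst p) * (snd r - snd p) - (snd q - snd p) * (fst r - fst p) \<noteq> 0"
  shows "line_through p q \<inter> line_through p r = {p}"
proof -
  have "z = p" if "z \<in> line_through p q" "z \<in> line_through p r" for z
  proof -
    define A B C D u v where "A = fst q - fst p" "B = snd q - snd p" "C = fst r - fst p" "D = snd r - snd p"
      "u = fst z - fst p" "v = snd z - snd p"
    have h: "A * v = B * u" "C * v = D * u" using that
      by (auto simp: line_through_def A_B_C_D_u_v_def split: prod.splits)
    have "u * (A * D - B * C) = A * (D * u) - C * (B * u)" by (simp add: algebra_simps)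
    also have "\<dots> = 0" unfolding h[symmetric] by (simp add: algebra_simps)
    finally have 1: "u * (A * D - B * C) = 0" .
    have "v * (A * D - B * C) = D * (A * v) - B * (C * v)" by (simp add: algebra_simps)
    also have "\<dots> = 0" unfolding h by (simp add: algebra_simps)
    finally have 2: "v * (A * D - B * C) = 0" .
    note 1 2
    hence "u = 0" "v = 0" using det by (auto simp: A_B_C_D_u_v_def)
    thus ?thesis by (auto simp: A_B_C_D_u_v_def prod_eq_iff)
  qed
  moreover have "p \<in> line_through p q" "p \<in> line_through p r" by (auto simp: line_through_def)
  ultimately show ?thesis by blast
qed

locale oc =
  fixes P :: "point set" and LL :: "point set set"
  assumes op: "origami_pair P LL" and o0: "(0, 0) \<in> P" and o1: "(0, 1) \<in> P"
begin

lemmas opc = op[unfolded origami_pair_def]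
lemma LL_line: "L \<in> LL \<Longrightarrow> is_line L" using opc[THEN conjunct1] by blast
lemma isect: "L1 \<in> LL \<Longrightarrow> L2 \<in> LL \<Longrightarrow> L1 \<inter> L2 = {p} \<Longrightarrow> p \<in> P"
  using opc[THEN conjunct2, THEN conjunct1] by blast
lemma lt: "p \<in> P \<Longrightarrow> q \<in> P \<Longrightarrow> p \<noteq> q \<Longrightarrow> line_through p q \<in> LL"
  using opc[THEN conjunct2, THEN conjunct2, THEN conjunct1] by blast
lemma pb: "p \<in> P \<Longrightarrow> q \<in> P \<Longrightarrow> p \<noteq> q \<Longrightarrow> perp_bisector p q \<in> LL"
  using opc[THEN conjunct2, THEN conjunct2, THEN conjunct2, THEN conjunct1] by blast
lemma eqd: "L1 \<in> LL \<Longrightarrow> L2 \<in> LL \<Longrightarrow> L1 \<noteq> L2 \<Longrightarrow> equidistant_line L1 L2 L \<Longrightarrow> L \<in> LL"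
  using opc[THEN conjunct2, THEN conjunct2, THEN conjunct2, THEN conjunct2, THEN conjunct1] by blast
lemma rf: "L1 \<in> LL \<Longrightarrow> L2 \<in> LL \<Longrightarrow> reflect_line L1 L2 \<in> LL"
  using opc[THEN conjunct2, THEN conjunct2, THEN conjunct2, THEN conjunct2, THEN conjunct2] by blast

lemma rf_lin:
  assumes "lin a b c \<in> LL" "(a, b) \<noteq> (0, 0)" "lin a' b' c' \<in> LL"
    and "A = a' - 2 * ((a * a' + b * b') / (a\<^sup>2 + b\<^sup>2)) * a"
    and "B = b' - 2 * ((a * a' + b * b') / (a\<^sup>2 + b\<^sup>2)) * b"
    and "C = c' - 2 * ((a * a' + b * b') / (a\<^sup>2 + b\<^sup>2)) * c"
  shows "lin A B C \<in> LL"
  using rf[OF assms(1,3)] reflect_lin[OF assms(2)] assms(4-6) by simp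

lemma rpt_P2:
  assumes "La \<in> LL" "Lb \<in> LL" "La \<inter> Lb = {p}" "lin a b c \<in> LL" "(a, b) \<noteq> (0, 0)"
  shows "rpt a b c p \<in> P"
proof -
  have "reflect_line (lin a b c) La \<inter> reflect_line (lin a b c) Lb = {rpt a b c p}"
    unfolding reflect_line_eq[OF assms(5)]
    using image_Int[OF rpt_inj[OF assms(5), of c], of La Lb] assms(3) by simp
  thus ?thesis using isect rf assms by blast
qed

lemma bis:
  assumes L1: "lin a1 b1 c1 \<in> LL" "(a1, b1) \<noteq> (0, 0)"
    and L2: "lin a2 b2 c2 \<in> LL" "(a2, b2) \<noteq> (0, 0)"
    and ne: "lin a1 b1 c1 \<noteq> lin a2 b2 c2"
    and A: "A = a1 * sqrt (a2\<^sup>2 + b2\<^sup>2) - a2 * sqrt (a1\<^sup>2 + b1\<^sup>2)"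
    and B: "B = b1 * sqrt (a2\<^sup>2 + b2\<^sup>2) - b2 * sqrt (a1\<^sup>2 + b1\<^sup>2)"
    and C: "C = c1 * sqrt (a2\<^sup>2 + b2\<^sup>2) - c2 * sqrt (a1\<^sup>2 + b1\<^sup>2)"
    and AB: "(A, B) \<noteq> (0, 0)"
  shows "lin A B C \<in> LL"
proof -
  have n1: "sqrt (a1\<^sup>2 + b1\<^sup>2) > 0" using nz[OF L1(2)] by (simp add: add_nonneg_nonneg order_le_neq_trans)
  have n2: "sqrt (a2\<^sup>2 + b2\<^sup>2) > 0" using nz[OF L2(2)] by (simp add: add_nonneg_nonneg order_le_neq_trans)
  have "infdist z (lin a1 b1 c1) = infdist z (lin a2 b2 c2)" if z: "z \<in> lin A B C" for z
  proof -
    define f1 where "f1 = a1 * fst z + b1 * snd z - c1"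
    define f2 where "f2 = a2 * fst z + b2 * snd z - c2"
    have "f1 * sqrt (a2\<^sup>2 + b2\<^sup>2) - f2 * sqrt (a1\<^sup>2 + b1\<^sup>2) = A * fst z + B * snd z - C"
      unfolding A B C f1_def f2_def by (simp add: algebra_simps)
    hence e: "f1 * sqrt (a2\<^sup>2 + b2\<^sup>2) = f2 * sqrt (a1\<^sup>2 + b1\<^sup>2)" using z by simp
    hence "\<bar>f1 * sqrt (a2\<^sup>2 + b2\<^sup>2)\<bar> = \<bar>f2 * sqrt (a1\<^sup>2 + b1\<^sup>2)\<bar>" by simp
    hence "\<bar>f1\<bar> * sqrt (a2\<^sup>2 + b2\<^sup>2) = \<bar>f2\<bar> * sqrt (a1\<^sup>2 + b1\<^sup>2)"
      unfolding abs_mult using n1 n2 by simp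
    hence "\<bar>f1\<bar> / sqrt (a1\<^sup>2 + b1\<^sup>2) = \<bar>f2\<bar> / sqrt (a2\<^sup>2 + b2\<^sup>2)"
      using n1 n2 frac_eq_eq[of "sqrt (a1\<^sup>2 + b1\<^sup>2)" "sqrt (a2\<^sup>2 + b2\<^sup>2)" "\<bar>f1\<bar>" "\<bar>f2\<bar>"] by (simp only: less_irrefl not_False_eq_True order_less_imp_not_eq2 simp_thms)
    thus ?thesis unfolding infdist_lin[OF L1(2)] infdist_lin[OF L2(2)] f1_def f2_def .
  qed
  hence "equidistant_line (lin a1 b1 c1) (lin a2 b2 c2) (lin A B C)"
    unfolding equidistant_line_def using is_line_lin[OF AB] by blast
  thus ?thesis using eqd L1 L2 ne by blast
qed

end




context oc begin

lemma isect_pt: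
  assumes "L1 \<in> LL" "L2 \<in> LL" "p \<in> L1" "p \<in> L2" "\<And>z. z \<in> L1 \<Longrightarrow> z \<in> L2 \<Longrightarrow> z = p"
  shows "p \<in> P"
  using assms isect[of L1 L2 p] by blast

lemma Yax: "lin 1 0 0 \<in> LL"
proof -
  have "line_through (0, 0) (0, 1) = lin 1 0 0" by (simp add: line_through_eq)
  thus ?thesis using lt[OF o0 o1] by simp
qed

lemma sqrt4: "sqrt 4 = (2::real)"
  using real_sqrt_abs[of 2] by simp

lemma p10: "(1, 0) \<in> P"
proof -
  have H: "lin 0 2 1 \<in> LL"
  proof -
    have "perp_bisector (0, 0) (0, 1) = lin 0 2 1" by (simp add: perp_bisector_eq)
    thus ?thesis using pb[OF o0 o1] by simp
  qed
  have H': "lin 0 (-2) (-1) \<in> LL" using H lin_scale[of "-1" 0 2 1] by simp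
  have m: "(0, 1/2) \<in> P"
    by (rule isect_pt[OF Yax H]) (auto simp: prod_eq_iff)
  have E: "lin 0 1 (1/4) \<in> LL"
  proof -
    have "perp_bisector (0, 0) (0, 1/2) = lin 0 1 (1/4)" by (simp add: perp_bisector_eq power2_eq_square)
    thus ?thesis using pb[OF o0 m] by simp
  qed
  have D: "lin 2 2 1 \<in> LL"
  proof (rule bis[OF Yax _ H'])
    show "lin 1 0 0 \<noteq> lin 0 (- 2) (- 1)"
    proof
      assume "lin 1 0 0 = lin 0 (- 2) (- 1)"
      moreover have "(0, 0) \<in> lin 1 0 0" by simp
      ultimately show False by simp
    qed
  qed (auto simp: sqrt4)
  have q: "(1/4, 1/4) \<in> P"
    by (rule isect_pt[OF E D]) (auto simp: prod_eq_iff)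
  have G: "lin (1/4) (-1/4) 0 \<in> LL"
  proof -
    have "line_through (0, 0) (1/4, 1/4) = lin (1/4) (-1/4) 0" by (simp add: line_through_eq)
    thus ?thesis using lt[OF o0 q] by simp
  qed
  have L2: "lin (-3/4) (-1/4) (-1/4) \<in> LL"
  proof -
    have "line_through (0, 1) (1/4, 1/4) = lin (-3/4) (-1/4) (-1/4)" by (simp add: line_through_eq)
    thus ?thesis using lt[OF o1 q] by simp
  qed
  have "lin 1 0 0 \<inter> lin (-3/4) (-1/4) (-1/4) = {(0, 1)}" by (auto simp: prod_eq_iff)
  from rpt_P2[OF Yax L2 this G] show ?thesis by (simp add: rpt_def power2_eq_square)
qed

lemma rptP:
  assumes p: "p \<in> P" and L: "lin a b c \<in> LL" and ab: "(a, b) \<noteq> (0, 0)"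
  shows "rpt a b c p \<in> P"
proof -
  have two: "\<exists>q r. q \<in> P \<and> r \<in> P \<and> p \<noteq> q \<and> p \<noteq> r \<and>
     (fst q - fst p) * (snd r - snd p) - (snd q - snd p) * (fst r - fst p) \<noteq> 0"
  proof (cases "fst p = 0")
    case False
    thus ?thesis using o0 o1 by (intro exI[of _ "(0,0)"] exI[of _ "(0,1)"]) (auto simp: algebra_simps)
  next
    case True
    show ?thesis
    proof (cases "snd p = 0")
      case False
      thus ?thesis using o0 p10 True by (intro exI[of _ "(0,0)"] exI[of _ "(1,0)"]) (auto simp: algebra_simps)
    next
      case False': True
      thus ?thesis using o1 p10 True by (intro exI[of _ "(0,1)"] exI[of _ "(1,0)"]) (auto simp: algebra_simps)
    qed
  qed
  then obtain q r where qr: "q \<in> P" "r \<in> P" "p \<noteq> q" "p \<noteq> r"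
     "(fst q - fst p) * (snd r - snd p) - (snd q - snd p) * (fst r - fst p) \<noteq> 0" by blast
  show ?thesis
    by (rule rpt_P2[OF lt[OF p qr(1,3)] lt[OF p qr(2,4)] lt_isect[OF qr(3-5)] L ab])
qed

lemma Xax: "lin 0 1 0 \<in> LL"
proof -
  have "line_through (0, 0) (1, 0) = lin 0 1 0" by (auto simp: line_through_def)
  thus ?thesis using lt[OF o0 p10] by simp
qed

lemma Diag: "lin (-1) 1 0 \<in> LL"
proof -
  have "perp_bisector (1, 0) (0, 1) = lin (-1) 1 0" by (auto simp: perp_bisector_eq)
  thus ?thesis using pb[OF p10 o1] by simp
qed

lemma proj: assumes "(u, v) \<in> P" shows "(u, 0) \<in> P"
proof (cases "v = 0")
  case True thus ?thesis using assms by simp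
next
  case False
  have "rpt 0 1 0 (u, v) = (u, -v)" by (simp add: rpt_def)
  hence m: "(u, -v) \<in> P" using rptP[OF assms Xax] by simp
  have "line_through (u, v) (u, -v) \<in> LL" using lt[OF assms m] False by simp
  thus ?thesis
    by (rule isect_pt[OF _ Xax]) (use False in \<open>auto simp: line_through_def\<close>)
qed

lemma swap: assumes "(u, v) \<in> P" shows "(v, u) \<in> P"
proof -
  have "rpt (-1) 1 0 (u, v) = (v, u)" by (simp add: rpt_def field_simps)
  thus ?thesis using rptP[OF assms Diag] by simp
qed

definition K where "K = {x. (x, 0) \<in> P}"

lemma coordK: assumes "(u, v) \<in> P" shows "u \<in> K" "v \<in> K"
  using proj[OF assms] proj[OF swap[OF assms]] by (auto simp: K_def)

lemma K0: "0 \<in> K" using o0 by (simp add: K_def)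
lemma K1: "1 \<in> K" using p10 by (simp add: K_def)

lemma Kneg: assumes "x \<in> K" shows "- x \<in> K"
proof -
  have "rpt 1 0 0 (x, 0) \<in> P" by (rule rptP[OF _ Yax]) (use assms in \<open>auto simp: K_def\<close>)
  thus ?thesis by (simp add: rpt_def K_def)
qed

lemma VK: assumes "a \<in> K" shows "lin 1 0 a \<in> LL"
proof (cases "a = 0")
  case True thus ?thesis using Yax by simp
next
  case False
  have a: "(a, 0) \<in> P" using assms by (simp add: K_def)
  have "perp_bisector (0, 0) (a, 0) = lin (2 * a) 0 (a\<^sup>2)" by (simp add: perp_bisector_eq)
  hence L: "lin (2 * a) 0 (a\<^sup>2) \<in> LL" using pb[OF o0 a] False by simp
  have "lin (-1) 0 (-a) \<in> LL"
    by (rule rf_lin[OF L _ Yax]) (use False in \<open>simp_all add: power2_eq_square\<close>)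
  thus ?thesis using lin_scale[of "-1" 1 0 a] by simp
qed

lemma Kdouble: assumes "a \<in> K" shows "2 * a \<in> K"
proof -
  have "rpt 1 0 a (0, 0) = (2 * a, 0)" by (simp add: rpt_def)
  thus ?thesis using rptP[OF o0 VK[OF assms]] by (simp add: K_def)
qed

lemma h2: assumes "(d::real) \<noteq> 0" shows "2 * (2 * d) * (d * s) / ((2 * d)\<^sup>2) = s"
proof -
  have e: "2 * (2 * d) * (d * s) = s * ((2 * d)\<^sup>2)" by (simp add: power2_eq_square algebra_simps)
  have nz: "(2 * d)\<^sup>2 \<noteq> 0" using assms by simp
  show ?thesis by (simp only: e nonzero_mult_div_cancel_right[OF nz])
qed

lemma Kadd: assumes "x \<in> K" "y \<in> K" shows "x + y \<in> K"
proof (cases "x = y")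
  case True thus ?thesis using Kdouble[OF assms(1)] by (metis mult_2)
next
  case False
  have xy: "(x, 0) \<in> P" "(y, 0) \<in> P" using assms by (auto simp: K_def)
  have "perp_bisector (x, 0) (y, 0) = lin (2 * (y - x)) 0 (y\<^sup>2 - x\<^sup>2)" by (simp add: perp_bisector_eq)
  hence L: "lin (2 * (y - x)) 0 (y\<^sup>2 - x\<^sup>2) \<in> LL" using pb[OF xy] False by simp
  have "rpt (2 * (y - x)) 0 (y\<^sup>2 - x\<^sup>2) (0, 0) = (x + y, 0)"
  proof -
    have d: "y - x \<noteq> 0" using False by simp
    have e: "y\<^sup>2 - x\<^sup>2 = (y - x) * (x + y)" by (simp add: power2_eq_square algebra_simps)
    have "2 * (2 * (y - x)) * ((y - x) * (x + y)) / ((2 * (y - x))\<^sup>2) = x + y" by (rule h2[OF d])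
    thus ?thesis unfolding e rpt_def by simp
  qed
  thus ?thesis using rptP[OF o0 L] False by (simp add: K_def)
qed

lemma Ksub: "x \<in> K \<Longrightarrow> y \<in> K \<Longrightarrow> x - y \<in> K"
  using Kadd[OF _ Kneg] by simp

lemma HK: assumes "b \<in> K" shows "lin 0 1 b \<in> LL"
  by (rule rf_lin[OF Diag _ VK[OF assms]]) (simp_all add: power2_eq_square)

lemma ptK: assumes "a \<in> K" "b \<in> K" shows "(a, b) \<in> P"
  by (rule isect_pt[OF VK[OF assms(1)] HK[OF assms(2)]]) (auto simp: prod_eq_iff)

lemma Kmul: assumes "x \<in> K" "y \<in> K" shows "x * y \<in> K"
proof -
  have y: "(0, y) \<in> P" using ptK[OF K0 assms(2)] .
  have "line_through (0, y) (1, 0) \<in> LL" using lt[OF y p10] by simp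
  hence "(x, y - y * x) \<in> P"
    by (rule isect_pt[OF VK[OF assms(1)]]) (auto simp: line_through_def algebra_simps)
  hence "y - y * x \<in> K" by (rule coordK)
  hence "y - (y - y * x) \<in> K" by (rule Ksub[OF assms(2)])
  thus ?thesis by (simp add: mult.commute)
qed

lemma Kinv: assumes "x \<in> K" "x \<noteq> 0" shows "inverse x \<in> K"
proof -
  have x: "(x, 0) \<in> P" using assms by (simp add: K_def)
  have "line_through (0, 1) (x, 0) \<in> LL" using lt[OF o1 x] by simp
  hence "(1, 1 - 1 / x) \<in> P"
  proof (rule isect_pt[OF VK[OF K1]])
    show "(1, 1 - 1 / x) \<in> line_through (0, 1) (x, 0)" using assms(2) by (simp add: line_through_def algebra_simps)
    fix z assume z: "z \<in> lin 1 0 1" "z \<in> line_through (0, 1) (x, 0)"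
    hence z1: "fst z = 1" by simp
    hence "x * (snd z - 1) = -1" using z(2) by (cases z) (simp add: line_through_def)
    hence "snd z = 1 - 1 / x" using assms(2) by (simp add: field_simps)
    thus "z = (1, 1 - 1 / x)" using z1 by (simp add: prod_eq_iff)
  qed simp
  hence "1 - 1 / x \<in> K" by (rule coordK)
  hence "1 - (1 - 1 / x) \<in> K" by (rule Ksub[OF K1])
  thus ?thesis by (simp add: inverse_eq_divide)
qed

lemma Kabs: "x \<in> K \<Longrightarrow> \<bar>x\<bar> \<in> K"
  using Kneg by (cases "x \<ge> 0") auto

lemma Kdiv: "x \<in> K \<Longrightarrow> y \<in> K \<Longrightarrow> x / y \<in> K"
  using Kmul[OF _ Kinv, of x y] K0 by (cases "y = 0") (auto simp: divide_inverse)

lemma Ksqrt: assumes t: "t \<in> K" shows "sqrt (1 + t\<^sup>2) \<in> K"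
proof (cases "t = 0")
  case True thus ?thesis using K1 by simp
next
  case False
  define s where "s = sqrt (t\<^sup>2 + 1)"
  have s0: "s > 0" unfolding s_def by (simp add: add_nonneg_pos)
  have s2: "s * s = t\<^sup>2 + 1" unfolding s_def by (simp add: add_nonneg_pos)
  have p: "(1, t) \<in> P" using ptK[OF K1 t] .
  have "line_through (0, 0) (1, t) = lin t (-1) 0" by (simp add: line_through_eq)
  hence L2: "lin t (-1) 0 \<in> LL" using lt[OF o0 p] by simp
  have B: "lin (-t) (s + 1) 0 \<in> LL"
  proof (rule bis[OF Xax _ L2])
    show "lin 0 1 0 \<noteq> lin t (- 1) 0"
    proof
      assume "lin 0 1 0 = lin t (- 1) 0"
      moreover have "(1, 0) \<in> lin 0 1 0" by simp
      ultimately show False using False by simp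
    qed
    show "(- t, s + 1) \<noteq> (0, 0)" using s0 by simp
  qed (auto simp: s_def)
  have "rpt (-t) (s + 1) 0 (1, t) = (s, 0)"
  proof -
    have N: "(-t)\<^sup>2 + (s + 1)\<^sup>2 = 2 * s * (s + 1)" using s2 by (simp add: power2_eq_square algebra_simps)
    have f: "(-t) * 1 + (s + 1) * t - 0 = s * t" by (simp add: algebra_simps)
    have nz: "2 * s * (s + 1) \<noteq> 0" using s0 by simp
    have x: "1 - 2 * (-t) * (s * t / (2 * s * (s + 1))) = s"
    proof -
      have "(s - 1) * (2 * s * (s + 1)) = 2 * s * (s * s - 1)" by (simp add: algebra_simps)
      also have "\<dots> = 2 * t * (s * t)" using s2 by (simp add: power2_eq_square algebra_simps)
      finally have "2 * t * (s * t) = (s - 1) * (2 * s * (s + 1))" ..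
      hence "2 * t * (s * t) / (2 * s * (s + 1)) = s - 1" using nz by (simp add: divide_eq_eq)
      thus ?thesis by (simp add: algebra_simps)
    qed
    have y: "t - 2 * (s + 1) * (s * t / (2 * s * (s + 1))) = 0"
    proof -
      have "2 * (s + 1) * (s * t) = t * (2 * s * (s + 1))" by (simp add: algebra_simps)
      hence "2 * (s + 1) * (s * t) / (2 * s * (s + 1)) = t" using nz by (simp add: divide_eq_eq)
      thus ?thesis by (simp add: algebra_simps)
    qed
    show ?thesis unfolding rpt_def fst_conv snd_conv N f using x y by simp
  qed
  hence "(s, 0) \<in> P" using rptP[OF p B] s0 by simp
  thus ?thesis by (simp add: K_def s_def add.commute)
qed

lemma distK: assumes "p \<in> P" "q \<in> P" shows "dist p q \<in> K"
proof -
  define a b where "a = fst p - fst q" "b = snd p - snd q"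
  have aK: "a \<in> K" and bK: "b \<in> K" unfolding a_b_def
    using coordK[of "fst p" "snd p"] coordK[of "fst q" "snd q"] assms Ksub by auto
  have d: "dist p q = sqrt (a\<^sup>2 + b\<^sup>2)" unfolding a_b_def dist_pt ..
  show ?thesis
  proof (cases "a = 0")
    case True thus ?thesis using d Kabs[OF bK] by simp
  next
    case False
    have "a\<^sup>2 + b\<^sup>2 = a\<^sup>2 * (1 + (b / a)\<^sup>2)" using False by (simp add: power2_eq_square field_simps)
    hence "sqrt (a\<^sup>2 + b\<^sup>2) = \<bar>a\<bar> * sqrt (1 + (b / a)\<^sup>2)" by (simp add: real_sqrt_mult)
    thus ?thesis using d Kmul[OF Kabs[OF aK] Ksqrt[OF Kdiv[OF bK aK]]] by simp
  qed
qed

end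



lemma perp_param:
  fixes a b u v :: real
  assumes ab: "(a, b) \<noteq> (0, 0)" and h: "a * u + b * v = 0"
  shows "u = ((- b * u + a * v) / (a\<^sup>2 + b\<^sup>2)) * (- b) \<and> v = ((- b * u + a * v) / (a\<^sup>2 + b\<^sup>2)) * a"
proof -
  have N: "a\<^sup>2 + b\<^sup>2 \<noteq> 0" using nz[OF ab] .
  have 1: "(- b * u + a * v) * (- b) = u * (a\<^sup>2 + b\<^sup>2)"
  proof -
    have hv: "b * v = - (a * u)" using h by linarith
    have "b * (a * v) = a * (b * v)" by (simp add: algebra_simps)
    hence "b * (a * v) = - a * (a * u)" unfolding hv by simp
    thus ?thesis by (simp add: power2_eq_square algebra_simps)
  qed
  have 2: "(- b * u + a * v) * a = v * (a\<^sup>2 + b\<^sup>2)"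
  proof -
    have hu: "a * u = - (b * v)" using h by linarith
    have "a * (b * u) = b * (a * u)" by (simp add: algebra_simps)
    hence "a * (b * u) = - b * (b * v)" unfolding hu by simp
    thus ?thesis by (simp add: power2_eq_square algebra_simps)
  qed
  have "((- b * u + a * v) / (a\<^sup>2 + b\<^sup>2)) * (- b) = ((- b * u + a * v) * (- b)) / (a\<^sup>2 + b\<^sup>2)" by simp
  also have "\<dots> = u" unfolding 1 using N by simp
  finally have u: "u = ((- b * u + a * v) / (a\<^sup>2 + b\<^sup>2)) * (- b)" ..
  have "((- b * u + a * v) / (a\<^sup>2 + b\<^sup>2)) * a = ((- b * u + a * v) * a) / (a\<^sup>2 + b\<^sup>2)" by simp
  also have "\<dots> = v" unfolding 2 using N by simp
  finally have v: "v = ((- b * u + a * v) / (a\<^sup>2 + b\<^sup>2)) * a" ..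
  show ?thesis using u v by blast
qed

lemma line_two_affine:
  assumes ab: "(a, b) \<noteq> (0, 0)"
    and h: "\<And>z. z \<in> lin a b c \<Longrightarrow> z \<in> lin A1 B1 C1 \<or> z \<in> lin A2 B2 C2"
  shows "lin a b c \<subseteq> lin A1 B1 C1 \<or> lin a b c \<subseteq> lin A2 B2 C2"
proof -
  have N: "a\<^sup>2 + b\<^sup>2 \<noteq> 0" using nz[OF ab] .
  define z0 where "z0 = (c * a / (a\<^sup>2 + b\<^sup>2), c * b / (a\<^sup>2 + b\<^sup>2))"
  have "a * (c * a / (a\<^sup>2 + b\<^sup>2)) + b * (c * b / (a\<^sup>2 + b\<^sup>2)) = c * (a\<^sup>2 + b\<^sup>2) / (a\<^sup>2 + b\<^sup>2)"
    by (simp add: algebra_simps power2_eq_square add_divide_distrib)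
  hence z0: "z0 \<in> lin a b c" using N ab by (auto simp: z0_def)
  define zt where "zt t = (fst z0 + t * (- b), snd z0 + t * a)" for t
  have ztL: "zt t \<in> lin a b c" for t using z0 by (simp add: zt_def algebra_simps)
  define al1 be1 al2 be2 where "al1 = A1 * fst z0 + B1 * snd z0 - C1" "be1 = A1 * (- b) + B1 * a"
     "al2 = A2 * fst z0 + B2 * snd z0 - C2" "be2 = A2 * (- b) + B2 * a"
  have g1: "A1 * fst (zt t) + B1 * snd (zt t) - C1 = al1 + be1 * t" for t
    by (simp add: zt_def al1_be1_al2_be2_def algebra_simps)
  have g2: "A2 * fst (zt t) + B2 * snd (zt t) - C2 = al2 + be2 * t" for t
    by (simp add: zt_def al1_be1_al2_be2_def algebra_simps)
  have ht: "al1 + be1 * t = 0 \<or> al2 + be2 * t = 0" for t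
    using h[OF ztL[of t]] g1[of t] g2[of t] by auto
  have "(al1 = 0 \<and> be1 = 0) \<or> (al2 = 0 \<and> be2 = 0)"
    using ht[of 0] ht[of 1] ht[of "-1"] by linarith
  moreover have "z = zt ((- b * (fst z - fst z0) + a * (snd z - snd z0)) / (a\<^sup>2 + b\<^sup>2))" if z: "z \<in> lin a b c" for z
  proof -
    have "a * (fst z - fst z0) + b * (snd z - snd z0) = 0" using z z0 by (simp add: algebra_simps)
    from perp_param[OF ab this]
    have "fst z = fst z0 + ((- b * (fst z - fst z0) + a * (snd z - snd z0)) / (a\<^sup>2 + b\<^sup>2)) * (- b)"
      "snd z = snd z0 + ((- b * (fst z - fst z0) + a * (snd z - snd z0)) / (a\<^sup>2 + b\<^sup>2)) * a"
      by linarith+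
    thus ?thesis unfolding zt_def by (simp add: prod_eq_iff)
  qed
  ultimately show ?thesis
  proof (elim disjE conjE)
    assume "al1 = 0" "be1 = 0" and hz: "\<And>z. z \<in> lin a b c \<Longrightarrow> z = zt ((- b * (fst z - fst z0) + a * (snd z - snd z0)) / (a\<^sup>2 + b\<^sup>2))"
    have "z \<in> lin A1 B1 C1" if "z \<in> lin a b c" for z
    proof -
      have "A1 * fst (zt T) + B1 * snd (zt T) - C1 = 0" for T using g1[of T] \<open>al1 = 0\<close> \<open>be1 = 0\<close> by simp
      hence "zt T \<in> lin A1 B1 C1" for T by simp
      thus ?thesis using hz[OF that] by metis
    qed
    thus ?thesis by blast
  next
    assume "al2 = 0" "be2 = 0" and hz: "\<And>z. z \<in> lin a b c \<Longrightarrow> z = zt ((- b * (fst z - fst z0) + a * (snd z - snd z0)) / (a\<^sup>2 + b\<^sup>2))"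
    have "z \<in> lin A2 B2 C2" if "z \<in> lin a b c" for z
    proof -
      have "A2 * fst (zt T) + B2 * snd (zt T) - C2 = 0" for T using g2[of T] \<open>al2 = 0\<close> \<open>be2 = 0\<close> by simp
      hence "zt T \<in> lin A2 B2 C2" for T by simp
      thus ?thesis using hz[OF that] by metis
    qed
    thus ?thesis by blast
  qed
qed

lemma lin_nonempty: assumes ab: "(a, b) \<noteq> (0, 0)" shows "\<exists>z. z \<in> lin a b c"
proof -
  have N: "a\<^sup>2 + b\<^sup>2 \<noteq> 0" using nz[OF ab] .
  have "a * (c * a / (a\<^sup>2 + b\<^sup>2)) + b * (c * b / (a\<^sup>2 + b\<^sup>2)) = c * (a\<^sup>2 + b\<^sup>2) / (a\<^sup>2 + b\<^sup>2)"
    by (simp add: algebra_simps power2_eq_square add_divide_distrib)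
  hence "(c * a / (a\<^sup>2 + b\<^sup>2), c * b / (a\<^sup>2 + b\<^sup>2)) \<in> lin a b c" using N ab by auto
  thus ?thesis by blast
qed

lemma equi_sub:
  assumes ab1: "(a1, b1) \<noteq> (0, 0)" and ab2: "(a2, b2) \<noteq> (0, 0)"
    and ne: "lin a1 b1 c1 \<noteq> lin a2 b2 c2"
    and ab: "(a, b) \<noteq> (0, 0)"
    and e: "e = 1 \<or> e = -1"
    and sub: "lin a b c \<subseteq> lin (a1 * sqrt (a2\<^sup>2 + b2\<^sup>2) - e * a2 * sqrt (a1\<^sup>2 + b1\<^sup>2))
       (b1 * sqrt (a2\<^sup>2 + b2\<^sup>2) - e * b2 * sqrt (a1\<^sup>2 + b1\<^sup>2)) (c1 * sqrt (a2\<^sup>2 + b2\<^sup>2) - e * c2 * sqrt (a1\<^sup>2 + b1\<^sup>2))"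
  shows "(a1 * sqrt (a2\<^sup>2 + b2\<^sup>2) - e * a2 * sqrt (a1\<^sup>2 + b1\<^sup>2), b1 * sqrt (a2\<^sup>2 + b2\<^sup>2) - e * b2 * sqrt (a1\<^sup>2 + b1\<^sup>2)) \<noteq> (0, 0)
     \<and> lin a b c = lin (a1 * sqrt (a2\<^sup>2 + b2\<^sup>2) - e * a2 * sqrt (a1\<^sup>2 + b1\<^sup>2))
       (b1 * sqrt (a2\<^sup>2 + b2\<^sup>2) - e * b2 * sqrt (a1\<^sup>2 + b1\<^sup>2)) (c1 * sqrt (a2\<^sup>2 + b2\<^sup>2) - e * c2 * sqrt (a1\<^sup>2 + b1\<^sup>2))"
proof -
  define n1 n2 where "n1 = sqrt (a1\<^sup>2 + b1\<^sup>2)" "n2 = sqrt (a2\<^sup>2 + b2\<^sup>2)"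
  have n1: "n1 > 0" using nz[OF ab1] unfolding n1_n2_def by (simp add: add_nonneg_nonneg order_le_neq_trans)
  have n2: "n2 > 0" using nz[OF ab2] unfolding n1_n2_def by (simp add: add_nonneg_nonneg order_le_neq_trans)
  have nd: "(a1 * n2 - e * a2 * n1, b1 * n2 - e * b2 * n1) \<noteq> (0, 0)"
  proof
    assume "(a1 * n2 - e * a2 * n1, b1 * n2 - e * b2 * n1) = (0, 0)"
    hence A: "a1 * n2 = e * a2 * n1" and B: "b1 * n2 = e * b2 * n1" by auto
    obtain z where z: "z \<in> lin a b c" using lin_nonempty[OF ab] by blast
    hence "z \<in> lin (a1 * n2 - e * a2 * n1) (b1 * n2 - e * b2 * n1) (c1 * n2 - e * c2 * n1)"
      using sub unfolding n1_n2_def by blast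
    hence "(a1 * n2 - e * a2 * n1) * fst z + (b1 * n2 - e * b2 * n1) * snd z = c1 * n2 - e * c2 * n1" by simp
    hence C: "c1 * n2 = e * c2 * n1" using A B by simp
    define k where "k = e * n1 / n2"
    have k0: "k \<noteq> 0" using e n1 n2 by (auto simp: k_def)
    have "a1 = k * a2" "b1 = k * b2" "c1 = k * c2" using A B C n2 by (auto simp: k_def field_simps)
    hence "lin a1 b1 c1 = lin a2 b2 c2" using lin_scale[OF k0] by simp
    thus False using ne by simp
  qed
  have eqL: "lin (a1 * n2 - e * a2 * n1) (b1 * n2 - e * b2 * n1) (c1 * n2 - e * c2 * n1) = lin a b c"
    using lin_sub_eq[OF ab nd, of c "c1 * n2 - e * c2 * n1"] sub unfolding n1_n2_def by blast
  show ?thesis using nd eqL[symmetric] unfolding n1_n2_def by blast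
qed

lemma equi_char:
  assumes ab1: "(a1, b1) \<noteq> (0, 0)" and ab2: "(a2, b2) \<noteq> (0, 0)"
    and ne: "lin a1 b1 c1 \<noteq> lin a2 b2 c2"
    and eq: "equidistant_line (lin a1 b1 c1) (lin a2 b2 c2) L"
  shows "\<exists>e. (e = 1 \<or> e = -1) \<and>
    (a1 * sqrt (a2\<^sup>2 + b2\<^sup>2) - e * a2 * sqrt (a1\<^sup>2 + b1\<^sup>2), b1 * sqrt (a2\<^sup>2 + b2\<^sup>2) - e * b2 * sqrt (a1\<^sup>2 + b1\<^sup>2)) \<noteq> (0, 0)
     \<and> L = lin (a1 * sqrt (a2\<^sup>2 + b2\<^sup>2) - e * a2 * sqrt (a1\<^sup>2 + b1\<^sup>2))
       (b1 * sqrt (a2\<^sup>2 + b2\<^sup>2) - e * b2 * sqrt (a1\<^sup>2 + b1\<^sup>2)) (c1 * sqrt (a2\<^sup>2 + b2\<^sup>2) - e * c2 * sqrt (a1\<^sup>2 + b1\<^sup>2))"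
proof -
  define n1 n2 where "n1 = sqrt (a1\<^sup>2 + b1\<^sup>2)" "n2 = sqrt (a2\<^sup>2 + b2\<^sup>2)"
  have n1: "n1 > 0" using nz[OF ab1] unfolding n1_n2_def by (simp add: add_nonneg_nonneg order_le_neq_trans)
  have n2: "n2 > 0" using nz[OF ab2] unfolding n1_n2_def by (simp add: add_nonneg_nonneg order_le_neq_trans)
  obtain a b c where ab: "(a, b) \<noteq> (0, 0)" and L: "L = lin a b c"
    using eq unfolding equidistant_line_def by (meson is_lineE)
  have h: "z \<in> lin (a1 * n2 - 1 * a2 * n1) (b1 * n2 - 1 * b2 * n1) (c1 * n2 - 1 * c2 * n1) \<or>
           z \<in> lin (a1 * n2 - (-1) * a2 * n1) (b1 * n2 - (-1) * b2 * n1) (c1 * n2 - (-1) * c2 * n1)"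
    if z: "z \<in> lin a b c" for z
  proof -
    define f1 f2 where "f1 = a1 * fst z + b1 * snd z - c1" "f2 = a2 * fst z + b2 * snd z - c2"
    have "\<bar>f1\<bar> / n1 = \<bar>f2\<bar> / n2"
      using eq z L unfolding equidistant_line_def infdist_lin[OF ab1] infdist_lin[OF ab2] f1_f2_def n1_n2_def
      by blast
    hence "\<bar>f1\<bar> * n2 = \<bar>f2\<bar> * n1" using n1 n2 by (simp add: frac_eq_eq)
    hence "\<bar>f1 * n2\<bar> = \<bar>f2 * n1\<bar>" using n1 n2 by (simp add: abs_mult)
    hence "f1 * n2 = f2 * n1 \<or> f1 * n2 = - (f2 * n1)" by arith
    moreover have "f1 * n2 - f2 * n1 = (a1 * n2 - 1 * a2 * n1) * fst z + (b1 * n2 - 1 * b2 * n1) * snd z - (c1 * n2 - 1 * c2 * n1)"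
      "f1 * n2 + f2 * n1 = (a1 * n2 - (-1) * a2 * n1) * fst z + (b1 * n2 - (-1) * b2 * n1) * snd z - (c1 * n2 - (-1) * c2 * n1)"
      unfolding f1_f2_def by (simp_all add: algebra_simps)
    ultimately show ?thesis by auto
  qed
  from line_two_affine[OF ab h]
  obtain e where e: "e = 1 \<or> e = -1" and sub: "lin a b c \<subseteq> lin (a1 * n2 - e * a2 * n1) (b1 * n2 - e * b2 * n1) (c1 * n2 - e * c2 * n1)"
    by blast
  from equi_sub[OF ab1 ab2 ne ab e sub[unfolded n1_n2_def]] e L show ?thesis by blast
qed






lemma oc_iff: "oc P LL \<longleftrightarrow> origami_pair P LL \<and> (0, 0) \<in> P \<and> (0, 1) \<in> P"
  unfolding oc_def by simp

lemma ON_iff: "\<alpha> \<in> origami_numbers \<longleftrightarrow> (\<forall>P LL. oc P LL \<longrightarrow> \<alpha> \<in> oc.K P)"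
proof
  assume "\<alpha> \<in> origami_numbers"
  then obtain v1 v2 where v: "v1 \<in> origami_points" "v2 \<in> origami_points" "\<bar>\<alpha>\<bar> = dist v1 v2"
    unfolding origami_numbers_def by blast
  show "\<forall>P LL. oc P LL \<longrightarrow> \<alpha> \<in> oc.K P"
  proof (intro allI impI)
    fix P LL assume o: "oc P LL"
    hence "P \<in> {P. (0, 0) \<in> P \<and> (0, 1) \<in> P \<and> origami_closed P}"
      unfolding oc_iff origami_closed_def by blast
    hence "v1 \<in> P" "v2 \<in> P" using v unfolding origami_points_def by blast+
    hence "\<bar>\<alpha>\<bar> \<in> oc.K P" using oc.distK[OF o] v(3) by simp
    thus "\<alpha> \<in> oc.K P" using oc.Kneg[OF o] by (cases "\<alpha> \<ge> 0") (auto, metis minus_minus)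
  qed
next
  assume h: "\<forall>P LL. oc P LL \<longrightarrow> \<alpha> \<in> oc.K P"
  have "(\<alpha>, 0) \<in> origami_points"
    unfolding origami_points_def origami_closed_def
  proof (intro InterI, elim CollectE conjE exE)
    fix P LL assume "(0, 0) \<in> P" "(0, 1) \<in> P" "origami_pair P LL"
    hence "oc P LL" unfolding oc_iff by blast
    thus "(\<alpha>, 0) \<in> P" using h oc.K_def by blast
  qed
  moreover have "(0, 0) \<in> origami_points" unfolding origami_points_def by blast
  moreover have "\<bar>\<alpha>\<bar> = dist (\<alpha>, 0) (0, 0)" by (simp add: dist_Pair_Pair)
  ultimately show "\<alpha> \<in> origami_numbers" unfolding origami_numbers_def by blast
qed

lemma imgI: "a \<in> A \<Longrightarrow> x = complex_of_real a \<Longrightarrow> x \<in> complex_of_real ` A" by simp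

lemma S_subfield: "is_subfield (complex_of_real ` origami_numbers)"
proof -
  have z: "0 \<in> origami_numbers" "1 \<in> origami_numbers"
    unfolding ON_iff using oc.K0 oc.K1 by blast+
  have add: "x + y \<in> origami_numbers" "x - y \<in> origami_numbers" "x * y \<in> origami_numbers"
    if "x \<in> origami_numbers" "y \<in> origami_numbers" for x y
    using that unfolding ON_iff using oc.Kadd oc.Ksub oc.Kmul by meson+
  have inv: "inverse x \<in> origami_numbers" if "x \<in> origami_numbers" "x \<noteq> 0" for x
    using that unfolding ON_iff using oc.Kinv by meson
  show ?thesis unfolding is_subfield_def
  proof (intro conjI ballI impI)
    show "0 \<in> complex_of_real ` origami_numbers" by (rule imgI[OF z(1)]) simp
    show "1 \<in> complex_of_real ` origami_numbers" by (rule imgI[OF z(2)]) simp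
  next
    fix x y assume x: "x \<in> complex_of_real ` origami_numbers" and y: "y \<in> complex_of_real ` origami_numbers"
    obtain a where a: "a \<in> origami_numbers" "x = of_real a" using x by (rule imageE) simp
    obtain b where b: "b \<in> origami_numbers" "y = of_real b" using y by (rule imageE) simp
    show "x + y \<in> complex_of_real ` origami_numbers" by (rule imgI[OF add(1)[OF a(1) b(1)]]) (simp add: a b)
    show "x - y \<in> complex_of_real ` origami_numbers" by (rule imgI[OF add(2)[OF a(1) b(1)]]) (simp add: a b)
    show "x * y \<in> complex_of_real ` origami_numbers" by (rule imgI[OF add(3)[OF a(1) b(1)]]) (simp add: a b)
  next
    fix x assume x: "x \<in> complex_of_real ` origami_numbers" and x0: "x \<noteq> 0"
    obtain a where a: "a \<in> origami_numbers" "x = of_real a" using x by (rule imageE) simp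
    have "a \<noteq> 0" using a(2) x0 by simp
    show "inverse x \<in> complex_of_real ` origami_numbers" by (rule imgI[OF inv[OF a(1) \<open>a \<noteq> 0\<close>]]) (simp add: a of_real_inverse)
  qed
qed

lemma S_sqrt: "\<forall>x\<in>complex_of_real ` origami_numbers. \<exists>y\<in>complex_of_real ` origami_numbers. y\<^sup>2 = 1 + x\<^sup>2"
proof
  fix x assume "x \<in> complex_of_real ` origami_numbers"
  then obtain a where a: "a \<in> origami_numbers" "x = of_real a" by (rule imageE) simp
  have "sqrt (1 + a\<^sup>2) \<in> origami_numbers" using a(1) unfolding ON_iff using oc.Ksqrt by meson
  moreover have "(complex_of_real (sqrt (1 + a\<^sup>2)))\<^sup>2 = 1 + x\<^sup>2"
  proof -
    have "(complex_of_real (sqrt (1 + a\<^sup>2)))\<^sup>2 = complex_of_real ((sqrt (1 + a\<^sup>2))\<^sup>2)"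
      by (simp only: of_real_power)
    also have "\<dots> = complex_of_real (1 + a\<^sup>2)" by simp
    also have "\<dots> = 1 + x\<^sup>2" unfolding a(2) by simp
    finally show ?thesis .
  qed
  ultimately show "\<exists>y\<in>complex_of_real ` origami_numbers. y\<^sup>2 = 1 + x\<^sup>2" by (intro bexI[OF _ imgI]) auto
qed

lemma F_sub_S: "F_sqrt_1_plus_sq \<subseteq> complex_of_real ` origami_numbers"
  unfolding F_sqrt_1_plus_sq_def by (rule Inter_lower) (use S_subfield S_sqrt in simp)




definition Fam where "Fam = {F. is_subfield F \<and> (\<forall>x\<in>F. \<exists>y\<in>F. y\<^sup>2 = 1 + x\<^sup>2)}"

lemma F_mem: "x \<in> F_sqrt_1_plus_sq \<longleftrightarrow> (\<forall>G\<in>Fam. x \<in> G)"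
  unfolding F_sqrt_1_plus_sq_def Fam_def by simp

definition KF where "KF = {r::real. complex_of_real r \<in> F_sqrt_1_plus_sq}"

lemma KF_mem: "r \<in> KF \<longleftrightarrow> (\<forall>G\<in>Fam. complex_of_real r \<in> G)"
  unfolding KF_def F_mem by simp

lemma Fam_sf: "G \<in> Fam \<Longrightarrow> is_subfield G" unfolding Fam_def by simp
lemma Fam_sq: "G \<in> Fam \<Longrightarrow> x \<in> G \<Longrightarrow> \<exists>y\<in>G. y\<^sup>2 = 1 + x\<^sup>2" unfolding Fam_def by simp

lemma sf0: "is_subfield G \<Longrightarrow> 0 \<in> G" unfolding is_subfield_def by simp
lemma sf1: "is_subfield G \<Longrightarrow> 1 \<in> G" unfolding is_subfield_def by simp
lemma sfadd: "is_subfield G \<Longrightarrow> x \<in> G \<Longrightarrow> y \<in> G \<Longrightarrow> x + y \<in> G" unfolding is_subfield_def by simp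
lemma sfsub: "is_subfield G \<Longrightarrow> x \<in> G \<Longrightarrow> y \<in> G \<Longrightarrow> x - y \<in> G" unfolding is_subfield_def by simp
lemma sfmul: "is_subfield G \<Longrightarrow> x \<in> G \<Longrightarrow> y \<in> G \<Longrightarrow> x * y \<in> G" unfolding is_subfield_def by simp
lemma sfinv: "is_subfield G \<Longrightarrow> x \<in> G \<Longrightarrow> x \<noteq> 0 \<Longrightarrow> inverse x \<in> G" unfolding is_subfield_def by simp

lemma KF0: "0 \<in> KF" unfolding KF_mem using Fam_sf sf0 by simp
lemma KF1: "1 \<in> KF" unfolding KF_mem using Fam_sf sf1 by simp
lemma KFadd: "x \<in> KF \<Longrightarrow> y \<in> KF \<Longrightarrow> x + y \<in> KF" unfolding KF_mem using Fam_sf sfadd by simp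
lemma KFsub: "x \<in> KF \<Longrightarrow> y \<in> KF \<Longrightarrow> x - y \<in> KF" unfolding KF_mem using Fam_sf sfsub by simp
lemma KFmul: "x \<in> KF \<Longrightarrow> y \<in> KF \<Longrightarrow> x * y \<in> KF" unfolding KF_mem using Fam_sf sfmul by simp
lemma KFinv: "x \<in> KF \<Longrightarrow> inverse x \<in> KF"
proof -
  assume x: "x \<in> KF"
  show ?thesis
  proof (cases "x = 0")
    case True thus ?thesis using KF0 by simp
  next
    case False
    thus ?thesis using x unfolding KF_mem using Fam_sf sfinv by simp
  qed
qed
lemma KFdiv: "x \<in> KF \<Longrightarrow> y \<in> KF \<Longrightarrow> x / y \<in> KF"
  using KFmul[OF _ KFinv] by (simp add: divide_inverse)
lemma KFneg: "x \<in> KF \<Longrightarrow> - x \<in> KF" using KFsub[OF KF0] by simp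
lemma KF2: "2 \<in> KF" using KFadd[OF KF1 KF1] by simp
lemma KFabs: "x \<in> KF \<Longrightarrow> \<bar>x\<bar> \<in> KF" using KFneg by (cases "x \<ge> 0") auto
lemma KFpow2: "x \<in> KF \<Longrightarrow> x\<^sup>2 \<in> KF" using KFmul by (simp add: power2_eq_square)

lemma KFsqrt: assumes "r \<in> KF" shows "sqrt (1 + r\<^sup>2) \<in> KF"
  unfolding KF_mem
proof
  fix G assume G: "G \<in> Fam"
  have r: "complex_of_real r \<in> G" using assms G unfolding KF_mem by blast
  obtain y where y: "y \<in> G" "y\<^sup>2 = 1 + (complex_of_real r)\<^sup>2" using Fam_sq[OF G r] by blast
  have "(complex_of_real (sqrt (1 + r\<^sup>2)))\<^sup>2 = complex_of_real ((sqrt (1 + r\<^sup>2))\<^sup>2)"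
    by (simp only: of_real_power)
  also have "\<dots> = 1 + (complex_of_real r)\<^sup>2" by simp
  finally have "y\<^sup>2 = (complex_of_real (sqrt (1 + r\<^sup>2)))\<^sup>2" using y(2) by simp
  hence "y = complex_of_real (sqrt (1 + r\<^sup>2)) \<or> y = - complex_of_real (sqrt (1 + r\<^sup>2))"
    by (simp add: power2_eq_iff)
  thus "complex_of_real (sqrt (1 + r\<^sup>2)) \<in> G"
  proof
    assume "y = - complex_of_real (sqrt (1 + r\<^sup>2))"
    hence "complex_of_real (sqrt (1 + r\<^sup>2)) = 0 - y" by simp
    thus ?thesis using sfsub[OF Fam_sf[OF G] sf0[OF Fam_sf[OF G]] y(1)] by simp
  qed (use y in simp)
qed

lemma KFsqrt2: assumes aK: "a \<in> KF" and bK: "b \<in> KF" shows "sqrt (a\<^sup>2 + b\<^sup>2) \<in> KF"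
proof (cases "a = 0")
  case True thus ?thesis using KFabs[OF bK] by simp
next
  case False
  have "a\<^sup>2 + b\<^sup>2 = a\<^sup>2 * (1 + (b / a)\<^sup>2)" using False by (simp add: power2_eq_square field_simps)
  hence "sqrt (a\<^sup>2 + b\<^sup>2) = \<bar>a\<bar> * sqrt (1 + (b / a)\<^sup>2)" by (simp add: real_sqrt_mult)
  thus ?thesis using KFmul[OF KFabs[OF aK] KFsqrt[OF KFdiv[OF bK aK]]] by simp
qed




definition PK :: "point set" where "PK = {p. fst p \<in> KF \<and> snd p \<in> KF}"
definition LK :: "point set set" where
  "LK = {L. \<exists>a b c. a \<in> KF \<and> b \<in> KF \<and> c \<in> KF \<and> (a, b) \<noteq> (0, 0) \<and> L = lin a b c}"

lemma LKI: "a \<in> KF \<Longrightarrow> b \<in> KF \<Longrightarrow> c \<in> KF \<Longrightarrow> (a, b) \<noteq> (0, 0) \<Longrightarrow> L = lin a b c \<Longrightarrow> L \<in> LK"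
  unfolding LK_def by blast

lemma LKE: assumes "L \<in> LK"
  obtains a b c where "a \<in> KF" "b \<in> KF" "c \<in> KF" "(a, b) \<noteq> (0, 0)" "L = lin a b c"
  using assms unfolding LK_def by blast

lemma isect_K:
  assumes K: "a1 \<in> KF" "b1 \<in> KF" "c1 \<in> KF" "a2 \<in> KF" "b2 \<in> KF" "c2 \<in> KF"
    and ab1: "(a1, b1) \<noteq> (0, 0)"
    and I: "lin a1 b1 c1 \<inter> lin a2 b2 c2 = {p}"
  shows "p \<in> PK"
proof -
  have e1: "a1 * fst p + b1 * snd p = c1" and e2: "a2 * fst p + b2 * snd p = c2" using I by auto
  define D where "D = a1 * b2 - a2 * b1"
  have D0: "D \<noteq> 0"
  proof
    assume D: "D = 0"
    define q where "q = (fst p - b1, snd p + a1)"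
    have "a1 * fst q + b1 * snd q = a1 * fst p + b1 * snd p" by (simp add: q_def algebra_simps)
    hence q1: "q \<in> lin a1 b1 c1" using e1 by simp
    have "a2 * fst q + b2 * snd q = a2 * fst p + b2 * snd p + D" by (simp add: q_def D_def algebra_simps)
    hence q2: "q \<in> lin a2 b2 c2" using e2 D by simp
    have "q = p" using q1 q2 I by blast
    hence "a1 = 0" "b1 = 0" by (auto simp: q_def prod_eq_iff)
    thus False using ab1 by simp
  qed
  have x1: "a1 * fst p = c1 - b1 * snd p" and x2: "a2 * fst p = c2 - b2 * snd p" using e1 e2 by linarith+
  have y1: "b1 * snd p = c1 - a1 * fst p" and y2: "b2 * snd p = c2 - a2 * fst p" using e1 e2 by linarith+
  have "fst p * D = b2 * (a1 * fst p) - b1 * (a2 * fst p)" by (simp add: D_def algebra_simps)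
  also have "\<dots> = c1 * b2 - c2 * b1" unfolding x1 x2 by (simp add: algebra_simps)
  finally have fx: "fst p = (c1 * b2 - c2 * b1) / D" using D0 by (simp add: eq_divide_eq)
  have "snd p * D = a1 * (b2 * snd p) - a2 * (b1 * snd p)" by (simp add: D_def algebra_simps)
  also have "\<dots> = a1 * c2 - a2 * c1" unfolding y1 y2 by (simp add: algebra_simps)
  finally have fy: "snd p = (a1 * c2 - a2 * c1) / D" using D0 by (simp add: eq_divide_eq)
  have DK: "D \<in> KF" unfolding D_def using K by (intro KFsub KFmul)
  show ?thesis unfolding PK_def using fx fy DK K by (auto intro!: KFdiv KFsub KFmul)
qed

lemma pair_K: "origami_pair PK LK"
  unfolding origami_pair_def
proof (intro conjI)
  show "\<forall>L\<in>LK. is_line L" by (auto elim!: LKE intro: is_line_lin)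
  show "\<forall>L1\<in>LK. \<forall>L2\<in>LK. \<forall>p. L1 \<inter> L2 = {p} \<longrightarrow> p \<in> PK"
  proof (intro ballI allI impI)
    fix L1 L2 p assume "L1 \<in> LK" "L2 \<in> LK" "L1 \<inter> L2 = {p}"
    thus "p \<in> PK" by (elim LKE) (metis isect_K)
  qed
  show "\<forall>p\<in>PK. \<forall>q\<in>PK. p \<noteq> q \<longrightarrow> line_through p q \<in> LK"
  proof (intro ballI impI)
    fix p q assume p: "p \<in> PK" and q: "q \<in> PK" and ne: "p \<noteq> q"
    show "line_through p q \<in> LK" unfolding line_through_eq
      by (rule LKI) (use p q ne in \<open>auto simp: PK_def prod_eq_iff intro!: KFsub KFmul\<close>)
  qed
  show "\<forall>p\<in>PK. \<forall>q\<in>PK. p \<noteq> q \<longrightarrow> perp_bisector p q \<in> LK"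
  proof (intro ballI impI)
    fix p q assume p: "p \<in> PK" and q: "q \<in> PK" and ne: "p \<noteq> q"
    show "perp_bisector p q \<in> LK" unfolding perp_bisector_eq
      by (rule LKI) (use p q ne in \<open>auto simp: PK_def prod_eq_iff intro!: KFsub KFmul KF2 KFpow2 KFadd\<close>)
  qed
  show "\<forall>L1\<in>LK. \<forall>L2\<in>LK. \<forall>L. L1 \<noteq> L2 \<and> equidistant_line L1 L2 L \<longrightarrow> L \<in> LK"
  proof (intro ballI allI impI, elim conjE)
    fix L1 L2 L assume L1: "L1 \<in> LK" and L2: "L2 \<in> LK" and ne: "L1 \<noteq> L2" and eq: "equidistant_line L1 L2 L"
    obtain a1 b1 c1 where 1: "a1 \<in> KF" "b1 \<in> KF" "c1 \<in> KF" "(a1, b1) \<noteq> (0, 0)" "L1 = lin a1 b1 c1"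
      using L1 by (rule LKE)
    obtain a2 b2 c2 where 2: "a2 \<in> KF" "b2 \<in> KF" "c2 \<in> KF" "(a2, b2) \<noteq> (0, 0)" "L2 = lin a2 b2 c2"
      using L2 by (rule LKE)
    from equi_char[OF 1(4) 2(4) ne[unfolded 1(5) 2(5)] eq[unfolded 1(5) 2(5)]]
    obtain e where e: "e = 1 \<or> e = -1"
      and nd: "(a1 * sqrt (a2\<^sup>2 + b2\<^sup>2) - e * a2 * sqrt (a1\<^sup>2 + b1\<^sup>2), b1 * sqrt (a2\<^sup>2 + b2\<^sup>2) - e * b2 * sqrt (a1\<^sup>2 + b1\<^sup>2)) \<noteq> (0, 0)"
      and L: "L = lin (a1 * sqrt (a2\<^sup>2 + b2\<^sup>2) - e * a2 * sqrt (a1\<^sup>2 + b1\<^sup>2))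
       (b1 * sqrt (a2\<^sup>2 + b2\<^sup>2) - e * b2 * sqrt (a1\<^sup>2 + b1\<^sup>2)) (c1 * sqrt (a2\<^sup>2 + b2\<^sup>2) - e * c2 * sqrt (a1\<^sup>2 + b1\<^sup>2))"
      by blast
    have eK: "e \<in> KF" using e KF1 KFneg[OF KF1] by auto
    have n1: "sqrt (a1\<^sup>2 + b1\<^sup>2) \<in> KF" using KFsqrt2 1 by simp
    have n2: "sqrt (a2\<^sup>2 + b2\<^sup>2) \<in> KF" using KFsqrt2 2 by simp
    show "L \<in> LK" by (rule LKI[OF _ _ _ nd L]) (use 1 2 eK n1 n2 in \<open>auto intro!: KFsub KFmul\<close>)
  qed
  show "\<forall>L1\<in>LK. \<forall>L2\<in>LK. reflect_line L1 L2 \<in> LK"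
  proof (intro ballI)
    fix L1 L2 assume L1: "L1 \<in> LK" and L2: "L2 \<in> LK"
    obtain a1 b1 c1 where 1: "a1 \<in> KF" "b1 \<in> KF" "c1 \<in> KF" "(a1, b1) \<noteq> (0, 0)" "L1 = lin a1 b1 c1"
      using L1 by (rule LKE)
    obtain a2 b2 c2 where 2: "a2 \<in> KF" "b2 \<in> KF" "c2 \<in> KF" "(a2, b2) \<noteq> (0, 0)" "L2 = lin a2 b2 c2"
      using L2 by (rule LKE)
    have k: "(a1 * a2 + b1 * b2) / (a1\<^sup>2 + b1\<^sup>2) \<in> KF" using 1 2 by (auto intro!: KFdiv KFadd KFmul KFpow2)
    show "reflect_line L1 L2 \<in> LK" unfolding 1(5) 2(5) reflect_lin[OF 1(4)]
      by (rule LKI[OF _ _ _ reflect_lin_nd[OF 1(4) 2(4)] refl]) (intro KFsub KFmul KF2 k 1(1-3) 2(1-3))+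
  qed
qed

lemma S_sub_F: "complex_of_real ` origami_numbers \<subseteq> F_sqrt_1_plus_sq"
proof
  fix x assume "x \<in> complex_of_real ` origami_numbers"
  then obtain \<alpha> where a: "\<alpha> \<in> origami_numbers" "x = complex_of_real \<alpha>" by (rule imageE) simp
  then obtain v1 v2 where v: "v1 \<in> origami_points" "v2 \<in> origami_points" "\<bar>\<alpha>\<bar> = dist v1 v2"
    unfolding origami_numbers_def by blast
  have "PK \<in> {P. (0, 0) \<in> P \<and> (0, 1) \<in> P \<and> origami_closed P}"
    using pair_K KF0 KF1 unfolding origami_closed_def PK_def by auto
  hence "origami_points \<subseteq> PK" unfolding origami_points_def by (rule Inter_lower)
  hence "v1 \<in> PK" "v2 \<in> PK" using v by auto
  hence "dist v1 v2 \<in> KF" unfolding dist_pt PK_def by (auto intro!: KFsqrt2 KFsub)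
  hence "\<bar>\<alpha>\<bar> \<in> KF" using v by simp
  hence "\<alpha> \<in> KF" using KFneg by (cases "\<alpha> \<ge> 0") (auto, metis minus_minus)
  thus "x \<in> F_sqrt_1_plus_sq" using a unfolding KF_def by simp
qed

theorem mainTheorem4:
  shows "complex_of_real ` origami_numbers = F_sqrt_1_plus_sq"
  using S_sub_F F_sub_S by (rule antisym)



end
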